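(* Let $\mathcal N$ be the one-layer ReLU CNN with input dimension $1\times 3\times 1$, $d_1\ge 1$ filters of dimension $1\times 2\times 1$ and stride $1$ (so the hidden layer has dimension $1\times 2\times d_1$). Then the maximal number of linear regions of $\mathcal N$ is $R_{\mathcal N}=d_1^3+d_1^2+d_1+1$.
   Context: One-layer ReLU CNN with input $X^0\in\mathbb R^{1\times 3\times 1}$, i.e. $x=(x_1,x_2,x_3)\in\mathbb R^3$, and filters $(w_{k,1},w_{k,2})$ with biases $b_k$, $1\le k\le d_1$; the neurons are the $2d_1$ pre-activations $w_{k,1}x_1+w_{k,2}x_2+b_k$ and $w_{k,1}x_2+w_{k,2}x_3+b_k$. An activation pattern assigns $\pm1$ to each neuron; its region is the set of inputs where every pre-activation times its sign is positive. $R_{\mathcal N}$ is the maximum over all parameter values of the number of activation patterns with nonempty region. *)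

theory Defs
  imports Main "HOL.Real"
begin

fun preact :: "(nat \<Rightarrow> real) \<Rightarrow> (nat \<Rightarrow> real) \<Rightarrow> (nat \<Rightarrow> real) \<Rightarrow> nat \<Rightarrow> nat
     \<Rightarrow> real \<times> real \<times> real \<Rightarrow> real" where
  "preact w1 w2 b k j (x1, x2, x3) =
     (if j = 0 then w1 k * x1 + w2 k * x2 + b k else w1 k * x2 + w2 k * x3 + b k)"

text \<open>Activation patterns: assign +1/-1 to each of the 2d neurons (k,j), k<d, j<2;
  extended by 0 outside the neuron index set so patterns are uniquely represented.\<close>
definition patterns :: "nat \<Rightarrow> (nat \<Rightarrow> nat \<Rightarrow> int) set" where
  "patterns d = {\<sigma>. \<forall>k j. (k < d \<and> j < 2 \<longrightarrow> \<sigma> k j \<in> {-1, 1})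
                          \<and> (\<not> (k < d \<and> j < 2) \<longrightarrow> \<sigma> k j = 0)}"

definition region :: "nat \<Rightarrow> (nat \<Rightarrow> real) \<Rightarrow> (nat \<Rightarrow> real) \<Rightarrow> (nat \<Rightarrow> real)
     \<Rightarrow> (nat \<Rightarrow> nat \<Rightarrow> int) \<Rightarrow> (real \<times> real \<times> real) set" where
  "region d w1 w2 b \<sigma> =
     {x. \<forall>k<d. \<forall>j<2. of_int (\<sigma> k j) * preact w1 w2 b k j x > 0}"

definition num_regions :: "nat \<Rightarrow> (nat \<Rightarrow> real) \<Rightarrow> (nat \<Rightarrow> real) \<Rightarrow> (nat \<Rightarrow> real) \<Rightarrow> nat" where
  "num_regions d w1 w2 b = card {\<sigma> \<in> patterns d. region d w1 w2 b \<sigma> \<noteq> {}}"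

definition is_max_regions :: "nat \<Rightarrow> nat \<Rightarrow> bool" where
  "is_max_regions d N \<longleftrightarrow>
     (\<exists>w1 w2 b. num_regions d w1 w2 b = N) \<and> (\<forall>w1 w2 b. num_regions d w1 w2 b \<le> N)"

end

theory Submission
  imports Defs
begin


definition sp :: "'i set \<Rightarrow> ('i \<Rightarrow> int) set" where
 "sp I = {\<sigma>. (\<forall>i. i \<notin> I \<longrightarrow> \<sigma> i = 0) \<and> (\<forall>i\<in>I. \<sigma> i = 1 \<or> \<sigma> i = -1)}"

definition RP :: "'a set \<Rightarrow> 'i set \<Rightarrow> ('i \<Rightarrow> 'a \<Rightarrow> real) \<Rightarrow> ('i \<Rightarrow> int) set" where
 "RP S I f = {\<sigma> \<in> sp I. \<exists>x\<in>S. \<forall>i\<in>I. real_of_int (\<sigma> i) * f i x > 0}"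

definition cvx :: "'a set \<Rightarrow> 'i set \<Rightarrow> ('i \<Rightarrow> 'a \<Rightarrow> real) \<Rightarrow> bool" where
 "cvx S I f \<longleftrightarrow> (\<forall>x\<in>S. \<forall>y\<in>S. \<forall>u::real. 0 \<le> u \<and> u \<le> 1 \<longrightarrow>
     (\<exists>z\<in>S. \<forall>i\<in>I. f i z = (1-u) * f i x + u * f i y))"

lemma finite_sp: "finite I \<Longrightarrow> finite (sp I)"
proof -
  assume "finite I"
  have "sp I \<subseteq> {f. \<forall>x. (x \<in> I \<longrightarrow> f x \<in> {1,-1}) \<and> (x \<notin> I \<longrightarrow> f x = 0)}"
    unfolding sp_def by auto
  moreover have "finite {f. \<forall>x. (x \<in> I \<longrightarrow> f x \<in> {1,-1::int}) \<and> (x \<notin> I \<longrightarrow> f x = 0)}"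
    by (rule finite_set_of_finite_funs) (use \<open>finite I\<close> in auto)
  ultimately show ?thesis by (rule finite_subset)
qed

lemma finite_RP: "finite I \<Longrightarrow> finite (RP S I f)"
  using finite_sp[of I] unfolding RP_def by auto

lemma RP_transfer:
  assumes "\<And>x. x \<in> S \<Longrightarrow> \<exists>y\<in>T. \<forall>i\<in>I. g i y = f i x"
  shows "RP S I f \<subseteq> RP T I g"
proof
  fix \<sigma> assume "\<sigma> \<in> RP S I f"
  then obtain x where "\<sigma> \<in> sp I" "x \<in> S" "\<forall>i\<in>I. real_of_int (\<sigma> i) * f i x > 0" unfolding RP_def by auto
  moreover obtain y where "y \<in> T" "\<forall>i\<in>I. g i y = f i x" using assms calculation(2) by blast
  ultimately have "\<sigma> \<in> sp I" "y \<in> T" "\<forall>i\<in>I. real_of_int (\<sigma> i) * g i y > 0" by auto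
  then show "\<sigma> \<in> RP T I g" unfolding RP_def by blast
qed

lemma card_RP_transfer:
  assumes "finite I" "\<And>x. x \<in> S \<Longrightarrow> \<exists>y\<in>T. \<forall>i\<in>I. g i y = f i x"
  shows "card (RP S I f) \<le> card (RP T I g)"
  by (rule card_mono[OF finite_RP[OF assms(1)] RP_transfer[OF assms(2)]]) auto

lemma RP_empty_set: "RP {} I f = {}" unfolding RP_def by auto

lemma RP_zero: "\<forall>x\<in>S. f j x = 0 \<Longrightarrow> RP S (insert j I) f = {}"
  unfolding RP_def by auto

lemma card_sub_single: "A \<subseteq> {c} \<Longrightarrow> card A \<le> 1"
  using card_mono[of "{c}" A] by simp

lemma card_RP_point:
  assumes "S \<subseteq> {p}" shows "card (RP S I f) \<le> 1"
proof -
  have "RP S I f \<subseteq> {\<lambda>i. if i \<in> I then (if f i p > 0 then 1 else -1) else 0}"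
  proof
    fix \<sigma> assume s: "\<sigma> \<in> RP S I f"
    then obtain x where x: "x \<in> S" "\<forall>i\<in>I. real_of_int (\<sigma> i) * f i x > 0"
      unfolding RP_def by auto
    have xp: "x = p" using x assms by auto
    have sp: "\<sigma> \<in> sp I" using s unfolding RP_def by auto
    have "\<sigma> i = (if i \<in> I then (if f i p > 0 then 1 else -1) else 0)" for i
    proof (cases "i \<in> I")
      case True
      then have "\<sigma> i = 1 \<or> \<sigma> i = -1" "real_of_int (\<sigma> i) * f i p > 0"
        using sp x xp unfolding sp_def by auto
      then show ?thesis using True by (auto simp: zero_less_mult_iff)
    next
      case False then show ?thesis using sp unfolding sp_def by auto
    qed
    then show "\<sigma> \<in> {\<lambda>i. if i \<in> I then (if f i p > 0 then 1 else -1) else 0}" by auto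
  qed
  then show ?thesis by (rule card_sub_single)
qed

lemma card_RP_nil: "card (RP S {} f) \<le> 1"
proof -
  have "RP S {} f \<subseteq> {\<lambda>i. 0}" unfolding RP_def sp_def by auto
  then show ?thesis by (rule card_sub_single)
qed

lemma deletion:
  assumes fin: "finite I" and j: "j \<notin> I" and cv: "cvx S (insert j I) f"
  shows "card (RP S (insert j I) f) \<le> card (RP S I f) + card (RP (S \<inter> {x. f j x = 0}) I f)"
proof -
  let ?R = "RP S (insert j I) f"
  let ?P = "{\<tau> \<in> ?R. \<tau> j = 1}" and ?M = "{\<tau> \<in> ?R. \<tau> j = -1}"
  let ?res = "\<lambda>\<tau>. \<tau>(j := (0::int))"
  have finR: "finite ?R" using fin by (simp add: finite_RP)
  have RPM: "?R = ?P \<union> ?M" unfolding RP_def sp_def by auto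
  have cR: "card ?R = card ?P + card ?M"
    by (subst RPM, rule card_Un_disjoint) (use finR in auto)
  have injP: "inj_on ?res ?P"
  proof (rule inj_onI)
    fix a b assume "a \<in> ?P" "b \<in> ?P" "a(j:=0) = b(j:=0)"
    then show "a = b"
    proof -
      assume h: "a \<in> ?P" "b \<in> ?P" "a(j:=0) = b(j:=0)"
      show "a = b"
      proof
        fix i show "a i = b i"
        proof (cases "i = j")
          case True then show ?thesis using h by simp
        next
          case False
          have "(a(j:=0)) i = (b(j:=0)) i" using h(3) by simp
          then show ?thesis using False by simp
        qed
      qed
    qed
  qed
  have injM: "inj_on ?res ?M"
  proof (rule inj_onI)
    fix a b assume "a \<in> ?M" "b \<in> ?M" "a(j:=0) = b(j:=0)"
    then show "a = b"
    proof -
      assume h: "a \<in> ?M" "b \<in> ?M" "a(j:=0) = b(j:=0)"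
      show "a = b"
      proof
        fix i show "a i = b i"
        proof (cases "i = j")
          case True then show ?thesis using h by simp
        next
          case False
          have "(a(j:=0)) i = (b(j:=0)) i" using h(3) by simp
          then show ?thesis using False by simp
        qed
      qed
    qed
  qed
  have sub: "?res ` ?R \<subseteq> RP S I f"
  proof
    fix \<sigma> assume "\<sigma> \<in> ?res ` ?R"
    then obtain \<tau> where t: "\<tau> \<in> ?R" "\<sigma> = \<tau>(j:=0)" by auto
    then show "\<sigma> \<in> RP S I f" using j unfolding RP_def sp_def by auto
  qed
  have subI: "?res ` ?P \<inter> ?res ` ?M \<subseteq> RP (S \<inter> {x. f j x = 0}) I f"
  proof
    fix \<sigma> assume "\<sigma> \<in> ?res ` ?P \<inter> ?res ` ?M"
    then obtain \<tau>1 \<tau>2 where t1: "\<tau>1 \<in> ?R" "\<tau>1 j = 1" "\<sigma> = \<tau>1(j:=0)"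
      and t2: "\<tau>2 \<in> ?R" "\<tau>2 j = -1" "\<sigma> = \<tau>2(j:=0)" by blast
    obtain x1 where x1: "x1 \<in> S" "\<forall>i\<in>insert j I. real_of_int (\<tau>1 i) * f i x1 > 0"
      using t1 unfolding RP_def by auto
    obtain x2 where x2: "x2 \<in> S" "\<forall>i\<in>insert j I. real_of_int (\<tau>2 i) * f i x2 > 0"
      using t2 unfolding RP_def by auto
    define a where "a = f j x1"
    define b where "b = f j x2"
    have a: "a > 0" using x1 t1 unfolding a_def by auto
    have b: "b < 0" using x2 t2 unfolding b_def by auto
    define u where "u = a / (a - b)"
    have u0: "0 \<le> u" "u \<le> 1" using a b unfolding u_def by (auto simp: field_simps)
    obtain z where z: "z \<in> S" "\<forall>i\<in>insert j I. f i z = (1-u) * f i x1 + u * f i x2"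
      using cv x1(1) x2(1) u0 unfolding cvx_def by blast
    have "f j z = (1-u)*a + u*b" using z unfolding a_def b_def by simp
    also have "\<dots> = 0"
    proof -
      have "a - b \<noteq> 0" using a b by simp
      then show ?thesis unfolding u_def by (simp add: field_simps)
    qed
    finally have fz: "f j z = 0" .
    have "real_of_int (\<sigma> i) * f i z > 0" if i: "i \<in> I" for i
    proof -
      have ij: "i \<noteq> j" using i j by auto
      have e1: "\<sigma> i = \<tau>1 i" "\<sigma> i = \<tau>2 i"
        using ij arg_cong[OF t1(3), of "\<lambda>g. g i"] arg_cong[OF t2(3), of "\<lambda>g. g i"] by simp_all
      have p1: "real_of_int (\<sigma> i) * f i x1 > 0" "real_of_int (\<sigma> i) * f i x2 > 0"
        using x1 x2 e1 i by auto
      have "real_of_int (\<sigma> i) * f i z = (1-u) * (real_of_int (\<sigma> i) * f i x1) + u * (real_of_int (\<sigma> i) * f i x2)"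
      proof -
        have e: "f i z = (1-u) * f i x1 + u * f i x2" using z i by auto
        show ?thesis unfolding e by (simp add: algebra_simps)
      qed
      also have "\<dots> > 0"
      proof (cases "u = 0")
        case True then show ?thesis using p1 by simp
      next
        case False
        then have "u > 0" using u0 by auto
        moreover have "(1-u) * (real_of_int (\<sigma> i) * f i x1) \<ge> 0" using u0 p1 by simp
        ultimately show ?thesis using p1 by (simp add: add_nonneg_pos)
      qed
      finally show ?thesis .
    qed
    moreover have "\<sigma> \<in> sp I" using t1 j unfolding RP_def sp_def by auto
    moreover have "z \<in> S \<inter> {x. f j x = 0}" using z(1) fz by simp
    ultimately show "\<sigma> \<in> RP (S \<inter> {x. f j x = 0}) I f"
      unfolding RP_def by blast
  qed
  have finRI: "finite (RP S I f)" "finite (RP (S \<inter> {x. f j x = 0}) I f)" using fin by (auto simp: finite_RP)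
  have "card ?P + card ?M = card (?res ` ?P) + card (?res ` ?M)"
    using card_image[OF injP] card_image[OF injM] by simp
  also have "\<dots> = card (?res ` ?P \<union> ?res ` ?M) + card (?res ` ?P \<inter> ?res ` ?M)"
    by (rule card_Un_Int) (use finR in auto)
  also have "\<dots> \<le> card (RP S I f) + card (RP (S \<inter> {x. f j x = 0}) I f)"
  proof (rule add_mono)
    show "card (?res ` ?P \<union> ?res ` ?M) \<le> card (RP S I f)"
      by (rule card_mono[OF finRI(1)]) (use sub in blast)
    show "card (?res ` ?P \<inter> ?res ` ?M) \<le> card (RP (S \<inter> {x. f j x = 0}) I f)"
      by (rule card_mono[OF finRI(2) subI])
  qed
  finally show ?thesis using cR by simp
qed




definition nc :: "'i set \<Rightarrow> ('i \<Rightarrow> 'a \<Rightarrow> real) \<Rightarrow> 'i set" where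
  "nc I f = {i\<in>I. \<exists>x y. f i x \<noteq> f i y}"

lemma nc_sub: "nc I f \<subseteq> I" unfolding nc_def by auto

lemma cvx1:
  assumes "\<forall>i\<in>I. \<exists>a c. \<forall>x. f i x = a*x + c"
  shows "cvx (UNIV::real set) I f"
  unfolding cvx_def
proof (intro ballI allI impI)
  fix x y u :: real
  show "\<exists>z\<in>UNIV. \<forall>i\<in>I. f i z = (1 - u) * f i x + u * f i y"
  proof (rule bexI[of _ "(1-u)*x + u*y"], intro ballI)
    fix i assume "i \<in> I"
    then obtain a c where "\<forall>x. f i x = a*x + c" using assms by blast
    then show "f i ((1-u)*x + u*y) = (1 - u) * f i x + u * f i y" by (simp add: algebra_simps)
  qed simp
qed

lemma one_d:
  assumes "finite I" "\<forall>i\<in>I. \<exists>a c. \<forall>x. f i x = a*x + c"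
  shows "card (RP (UNIV::real set) I f) \<le> 1 + card (nc I f)"
  using assms
proof (induction I rule: finite_induct)
  case empty
  then show ?case using card_RP_nil[of UNIV f] by simp
next
  case (insert j I)
  have IH: "card (RP UNIV I f) \<le> 1 + card (nc I f)" using insert by auto
  have del: "card (RP UNIV (insert j I) f) \<le> card (RP UNIV I f) + card (RP (UNIV \<inter> {x. f j x = 0}) I f)"
    by (rule deletion[OF insert(1,2) cvx1[OF insert(4)]])
  obtain a c where ac: "\<forall>x. f j x = a*x + c" using insert(4) by blast
  have finnc: "finite (nc (insert j I) f)" using insert(1) nc_sub[of "insert j I" f]
    by (meson finite.insertI finite_subset)
  have mono: "card (nc I f) \<le> card (nc (insert j I) f)"
    by (rule card_mono[OF finnc]) (auto simp: nc_def)
  show ?case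
  proof (cases "a = 0")
    case True
    show ?thesis
    proof (cases "c = 0")
      case True
      then have "RP UNIV (insert j I) f = {}" using \<open>a = 0\<close> ac by (intro RP_zero) simp
      then show ?thesis by simp
    next
      case False
      then have "UNIV \<inter> {x. f j x = 0} = {}" using \<open>a = 0\<close> ac by auto
      then show ?thesis using del IH mono by (simp add: RP_empty_set)
    qed
  next
    case False
    have Z: "UNIV \<inter> {x. f j x = 0} \<subseteq> {-c/a}" using False ac by (auto simp: field_simps)
    have c1: "card (RP (UNIV \<inter> {x. f j x = 0}) I f) \<le> 1" by (rule card_RP_point[OF Z])
    have "f j 0 \<noteq> f j 1" using False ac by simp
    then have "nc (insert j I) f = insert j (nc I f)" unfolding nc_def by blast
    moreover have "j \<notin> nc I f" using insert(2) nc_sub[of I f] by blast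
    moreover have "finite (nc I f)" using insert(1) nc_sub[of I f] by (rule finite_subset[rotated])
    ultimately have "card (nc (insert j I) f) = Suc (card (nc I f))" by simp
    then show ?thesis using del IH c1 by simp
  qed
qed




definition lin1 :: "(real \<Rightarrow> real) \<Rightarrow> bool" where "lin1 g \<longleftrightarrow> (\<exists>a c. \<forall>x. g x = a*x + c)"
definition lin2 :: "(real \<times> real \<Rightarrow> real) \<Rightarrow> bool" where
  "lin2 g \<longleftrightarrow> (\<exists>a b c. \<forall>p. g p = a*fst p + b*snd p + c)"
definition hor2 :: "(real \<times> real \<Rightarrow> real) \<Rightarrow> bool" where
  "hor2 g \<longleftrightarrow> (\<exists>b c. \<forall>p. g p = b*snd p + c)"

lemma hor2_lin2: "hor2 g \<Longrightarrow> lin2 g"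
  unfolding hor2_def lin2_def by (metis mult_zero_left add_0)

lemma lin2_line: "lin2 g \<Longrightarrow> lin1 (\<lambda>t. g (t, k*t + e))"
proof -
  assume "lin2 g"
  then obtain a b c where "\<forall>p. g p = a*fst p + b*snd p + c" unfolding lin2_def by blast
  then have "\<forall>t. g (t, k*t + e) = (a + b*k)*t + (b*e + c)" by (simp add: algebra_simps)
  then show ?thesis unfolding lin1_def by blast
qed

lemma lin2_vline: "lin2 g \<Longrightarrow> lin1 (\<lambda>t. g (e, t))"
proof -
  assume "lin2 g"
  then obtain a b c where "\<forall>p. g p = a*fst p + b*snd p + c" unfolding lin2_def by blast
  then have "\<forall>t. g (e, t) = b*t + (a*e + c)" by (simp add: algebra_simps)
  then show ?thesis unfolding lin1_def by blast
qed

lemma hor2_const: "hor2 g \<Longrightarrow> g (t, e) = g (s, e)"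
  unfolding hor2_def by auto

lemma one_d': "finite I \<Longrightarrow> \<forall>i\<in>I. lin1 (f i) \<Longrightarrow> card (RP (UNIV::real set) I f) \<le> 1 + card (nc I f)"
  using one_d[of I f] unfolding lin1_def by blast

lemma cvx2:
  assumes "\<forall>i\<in>I. lin2 (f i)"
  shows "cvx (UNIV::(real\<times>real) set) I f"
  unfolding cvx_def
proof (intro ballI allI impI)
  fix x y :: "real\<times>real" and u :: real
  show "\<exists>z\<in>UNIV. \<forall>i\<in>I. f i z = (1 - u) * f i x + u * f i y"
  proof (rule bexI[of _ "((1-u)*fst x + u*fst y, (1-u)*snd x + u*snd y)"], intro ballI)
    fix i assume "i \<in> I"
    then obtain a b c where e: "\<forall>p. f i p = a*fst p + b*snd p + c" using assms unfolding lin2_def by blast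
    show "f i ((1-u)*fst x + u*fst y, (1-u)*snd x + u*snd y) = (1 - u) * f i x + u * f i y"
      unfolding e[rule_format] by (simp add: algebra_simps)
  qed simp
qed

lemma zero_line:
  assumes fin: "finite I" and lin: "\<forall>i\<in>I. lin2 (f i)"
    and g: "\<forall>p. g p = a*fst p + b*snd p + c" and ab: "a \<noteq> 0 \<or> b \<noteq> 0"
  shows "\<exists>\<psi>. (\<forall>p. g p = 0 \<longrightarrow> (\<exists>t. \<psi> t = p)) \<and> (\<forall>i\<in>I. lin1 (\<lambda>t. f i (\<psi> t)))"
proof (cases "b = 0")
  case False
  let ?\<psi> = "\<lambda>t. (t, (-a/b)*t + (-c/b))"
  have "\<forall>p. g p = 0 \<longrightarrow> (\<exists>t. ?\<psi> t = p)"
  proof (intro allI impI)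
    fix p assume "g p = 0"
    then have "a*fst p + b*snd p + c = 0" using g by simp
    then have "snd p = (-a/b)*fst p + (-c/b)" using False by (simp add: field_simps)
    then show "\<exists>t. ?\<psi> t = p" by (intro exI[of _ "fst p"]) (simp add: prod_eq_iff)
  qed
  moreover have "\<forall>i\<in>I. lin1 (\<lambda>t. f i (?\<psi> t))" using lin lin2_line by blast
  ultimately show ?thesis by (intro exI[of _ ?\<psi>]) simp
next
  case True
  then have a: "a \<noteq> 0" using ab by simp
  let ?\<psi> = "\<lambda>t. (-c/a, t)"
  have "\<forall>p. g p = 0 \<longrightarrow> (\<exists>t. ?\<psi> t = p)"
  proof (intro allI impI)
    fix p assume "g p = 0"
    then have "a*fst p + c = 0" using g True by simp
    then have "fst p = -c/a" using a by (simp add: field_simps)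
    then show "\<exists>t. ?\<psi> t = p" by (intro exI[of _ "snd p"]) (simp add: prod_eq_iff)
  qed
  moreover have "\<forall>i\<in>I. lin1 (\<lambda>t. f i (?\<psi> t))" using lin lin2_vline by blast
  ultimately show ?thesis by (intro exI[of _ ?\<psi>]) simp
qed

lemma two_d_G:
  assumes "finite G" "\<forall>i\<in>G. lin2 (f i)"
  shows "2 * card (RP (UNIV::(real\<times>real) set) G f) \<le> 2 + card G * (card G + 1)"
  using assms
proof (induction G rule: finite_induct)
  case empty
  then show ?case using card_RP_nil[of UNIV f] by simp
next
  case (insert j G)
  let ?n = "card G"
  have IH: "2 * card (RP UNIV G f) \<le> 2 + ?n * (?n + 1)" using insert by auto
  have del: "card (RP UNIV (insert j G) f) \<le> card (RP UNIV G f) + card (RP (UNIV \<inter> {x. f j x = 0}) G f)"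
    by (rule deletion[OF insert(1,2) cvx2[OF insert(4)]])
  obtain a b c where abc: "\<forall>p. f j p = a*fst p + b*snd p + c" using insert(4) unfolding lin2_def by blast
  have cardins: "card (insert j G) = Suc ?n" using insert by simp
  show ?case
  proof (cases "\<forall>p. f j p = 0")
    case True
    then have "RP UNIV (insert j G) f = {}" by (intro RP_zero) simp
    then show ?thesis by simp
  next
    case False
    then have nz: "\<not>(\<forall>p. f j p = 0)" .
    have Zb: "card (RP (UNIV \<inter> {x. f j x = 0}) G f) \<le> 1 + ?n"
    proof (cases "a = 0 \<and> b = 0")
      case True
      then have fc: "\<forall>p. f j p = c" using abc by simp
      then have "c \<noteq> 0" using nz by auto
      then have e: "UNIV \<inter> {x. f j x = 0} = {}" using fc by auto
      show ?thesis unfolding e RP_empty_set by simp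
    next
      case False
      then have ab: "a \<noteq> 0 \<or> b \<noteq> 0" by simp
      obtain \<psi> where psi: "\<forall>p. f j p = 0 \<longrightarrow> (\<exists>t. \<psi> t = p)" "\<forall>i\<in>G. lin1 (\<lambda>t. f i (\<psi> t))"
        using zero_line[OF insert(1) _ abc ab, of f] insert(4) by blast
      have "card (RP (UNIV \<inter> {x. f j x = 0}) G f) \<le> card (RP UNIV G (\<lambda>i t. f i (\<psi> t)))"
      proof (rule card_RP_transfer[OF insert(1)])
        fix x assume "x \<in> UNIV \<inter> {x. f j x = 0}"
        then have "f j x = 0" by simp
        then obtain t where "\<psi> t = x" using psi(1) by blast
        then show "\<exists>y\<in>UNIV. \<forall>i\<in>G. f i (\<psi> y) = f i x" by auto
      qed
      also have "\<dots> \<le> 1 + card (nc G (\<lambda>i t. f i (\<psi> t)))"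
        by (rule one_d'[OF insert(1)]) (use psi(2) in simp)
      also have "\<dots> \<le> 1 + ?n" using card_mono[OF insert(1) nc_sub] by simp
      finally show ?thesis .
    qed
    have "2 * card (RP UNIV (insert j G) f) \<le> 2 + ?n * (?n + 1) + 2 * (1 + ?n)"
      using del IH Zb by simp
    also have "\<dots> = 2 + Suc ?n * (Suc ?n + 1)" by (simp add: algebra_simps)
    finally show ?thesis using cardins by simp
  qed
qed




lemma two_d:
  assumes "finite G" "finite H" "G \<inter> H = {}" "\<forall>i\<in>G. lin2 (f i)" "\<forall>i\<in>H. hor2 (f i)"
  shows "2 * card (RP (UNIV::(real\<times>real) set) (G \<union> H) f)
           \<le> 2 + card G * (card G + 1) + 2 * card H * (card G + 1)"
  using assms(2,3,5)
proof (induction H rule: finite_induct)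
  case empty
  then show ?case using two_d_G[OF assms(1,4)] by simp
next
  case (insert h H)
  let ?n = "card G"
  have hG: "h \<notin> G \<union> H" using insert by auto
  have IH: "2 * card (RP UNIV (G \<union> H) f) \<le> 2 + ?n * (?n + 1) + 2 * card H * (?n + 1)"
    using insert by auto
  have finGH: "finite (G \<union> H)" using assms(1) insert(1) by simp
  have linall: "\<forall>i\<in>insert h (G \<union> H). lin2 (f i)" using assms(4) insert(5) hor2_lin2 by blast
  have del: "card (RP UNIV (insert h (G \<union> H)) f) \<le> card (RP UNIV (G \<union> H) f) + card (RP (UNIV \<inter> {x. f h x = 0}) (G \<union> H) f)"
    by (rule deletion[OF finGH hG cvx2[OF linall]])
  have eqI: "insert h (G \<union> H) = G \<union> insert h H" by auto
  obtain bh ch where bc: "\<forall>p. f h p = bh*snd p + ch" using insert(5) unfolding hor2_def by blast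
  have cardins: "card (insert h H) = Suc (card H)" using insert by simp
  show ?case
  proof (cases "\<forall>p. f h p = 0")
    case True
    then have "RP UNIV (insert h (G \<union> H)) f = {}" by (intro RP_zero) simp
    then show ?thesis by simp
  next
    case False
    have Zb: "card (RP (UNIV \<inter> {x. f h x = 0}) (G \<union> H) f) \<le> 1 + ?n"
    proof (cases "bh = 0")
      case True
      then have fc: "\<forall>p. f h p = ch" using bc by simp
      have "ch \<noteq> 0"
      proof
        assume "ch = 0"
        then have "\<forall>p. f h p = 0" using fc by simp
        then show False using False by blast
      qed
      then have e: "UNIV \<inter> {x. f h x = 0} = {}" using fc by simp
      show ?thesis unfolding e RP_empty_set by simp
    next
      case bh: False
      let ?\<psi> = "\<lambda>t::real. (t, 0 * t + (-ch/bh))"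
      have "card (RP (UNIV \<inter> {x. f h x = 0}) (G \<union> H) f) \<le> card (RP UNIV (G \<union> H) (\<lambda>i t. f i (?\<psi> t)))"
      proof (rule card_RP_transfer[OF finGH])
        fix x assume "x \<in> UNIV \<inter> {x. f h x = 0}"
        then have "bh * snd x + ch = 0" using bc by simp
        then have "snd x = -ch/bh" using bh by (simp add: field_simps)
        then have "?\<psi> (fst x) = x" by (simp add: prod_eq_iff)
        then show "\<exists>y\<in>UNIV. \<forall>i\<in>G \<union> H. f i (?\<psi> y) = f i x"
          by (intro bexI[of _ "fst x"]) simp_all
      qed
      also have "\<dots> \<le> 1 + card (nc (G \<union> H) (\<lambda>i t. f i (?\<psi> t)))"
      proof (rule one_d'[OF finGH], intro ballI)
        fix i assume "i \<in> G \<union> H"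
        then have "lin2 (f i)" using linall by auto
        then show "lin1 (\<lambda>t. f i (?\<psi> t))" by (rule lin2_line)
      qed
      also have "\<dots> \<le> 1 + ?n"
      proof -
        have "nc (G \<union> H) (\<lambda>i t. f i (?\<psi> t)) \<subseteq> G"
        proof
          fix i assume i: "i \<in> nc (G \<union> H) (\<lambda>i t. f i (?\<psi> t))"
          then obtain x y where "f i (?\<psi> x) \<noteq> f i (?\<psi> y)" "i \<in> G \<union> H" unfolding nc_def by auto
          moreover have "i \<in> H \<Longrightarrow> f i (?\<psi> x) = f i (?\<psi> y)"
            using insert(5) hor2_const by simp
          ultimately show "i \<in> G" by auto
        qed
        then show ?thesis using card_mono[OF assms(1)] by simp
      qed
      finally show ?thesis .
    qed
    have "2 * card (RP UNIV (G \<union> insert h H) f) \<le> 2 + ?n * (?n + 1) + 2 * card H * (?n + 1) + 2 * (1 + ?n)"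
      using del IH Zb by simp
    also have "\<dots> = 2 + ?n * (?n + 1) + 2 * Suc (card H) * (?n + 1)" by (simp add: algebra_simps)
    finally show ?thesis using cardins by simp
  qed
qed




lemma preact_gen: "preact w1 w2 b k j p = (if j = 0 then w1 k * fst p + w2 k * fst (snd p) + b k
    else w1 k * fst (snd p) + w2 k * snd (snd p) + b k)"
  by (cases p) simp

definition FF :: "(nat \<Rightarrow> real) \<Rightarrow> (nat \<Rightarrow> real) \<Rightarrow> (nat \<Rightarrow> real) \<Rightarrow> nat \<times> nat \<Rightarrow> real \<times> real \<times> real \<Rightarrow> real" where
  "FF w1 w2 b i p = preact w1 w2 b (fst i) (snd i) p"

lemma FF0[simp]: "FF w1 w2 b (k,0) (x,y,z) = w1 k * x + w2 k * y + b k"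
  unfolding FF_def by simp
lemma FF1[simp]: "FF w1 w2 b (k,Suc 0) (x,y,z) = w1 k * y + w2 k * z + b k"
  unfolding FF_def by simp

definition lin3 :: "(real \<times> real \<times> real \<Rightarrow> real) \<Rightarrow> bool" where
  "lin3 g \<longleftrightarrow> (\<exists>a1 a2 a3 c. \<forall>p. g p = a1*fst p + a2*fst (snd p) + a3*snd (snd p) + c)"

lemma lin3_FF: "lin3 (FF w1 w2 b i)"
proof (cases "snd i = 0")
  case True
  have "\<forall>p. FF w1 w2 b i p = w1 (fst i)*fst p + w2 (fst i)*fst (snd p) + 0*snd (snd p) + b (fst i)"
  proof
    fix p :: "real\<times>real\<times>real" show "FF w1 w2 b i p = w1 (fst i)*fst p + w2 (fst i)*fst (snd p) + 0*snd (snd p) + b (fst i)"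
      using True by (cases p) (simp add: FF_def)
  qed
  then show ?thesis unfolding lin3_def by blast
next
  case False
  have "\<forall>p. FF w1 w2 b i p = 0*fst p + w1 (fst i)*fst (snd p) + w2 (fst i)*snd (snd p) + b (fst i)"
  proof
    fix p :: "real\<times>real\<times>real" show "FF w1 w2 b i p = 0*fst p + w1 (fst i)*fst (snd p) + w2 (fst i)*snd (snd p) + b (fst i)"
      using False by (cases p) (simp add: FF_def)
  qed
  then show ?thesis unfolding lin3_def by blast
qed

lemma cvx3:
  assumes "\<forall>i\<in>I. lin3 (f i)"
  shows "cvx (UNIV::(real\<times>real\<times>real) set) I f"
  unfolding cvx_def
proof (intro ballI allI impI)
  fix x y :: "real\<times>real\<times>real" and u :: real
  show "\<exists>z\<in>UNIV. \<forall>i\<in>I. f i z = (1 - u) * f i x + u * f i y"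
  proof (rule bexI[of _ "((1-u)*fst x + u*fst y, (1-u)*fst (snd x) + u*fst (snd y), (1-u)*snd (snd x) + u*snd (snd y))"], intro ballI)
    fix i assume "i \<in> I"
    then obtain a1 a2 a3 c where e: "\<forall>p. f i p = a1*fst p + a2*fst (snd p) + a3*snd (snd p) + c"
      using assms unfolding lin3_def by blast
    show "f i ((1-u)*fst x + u*fst y, (1-u)*fst (snd x) + u*fst (snd y), (1-u)*snd (snd x) + u*snd (snd y)) = (1 - u) * f i x + u * f i y"
      unfolding e[rule_format] by (simp add: algebra_simps)
  qed simp
qed

definition I0 :: "nat \<Rightarrow> (nat\<times>nat) set" where "I0 d = (\<lambda>k. (k,0)) ` {..<d}"
definition I1 :: "nat \<Rightarrow> (nat\<times>nat) set" where "I1 m = (\<lambda>k. (k,Suc 0)) ` {..<m}"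

lemma card_I0: "card (I0 d) = d" unfolding I0_def by (simp add: card_image inj_on_def)
lemma card_I1: "card (I1 d) = d" unfolding I1_def by (simp add: card_image inj_on_def)
lemma fin_I0: "finite (I0 d)" unfolding I0_def by simp
lemma fin_I1: "finite (I1 d)" unfolding I1_def by simp
lemma I01_disj: "I0 d \<inter> I1 m = {}" unfolding I0_def I1_def by auto

lemma stepA: "2 * card (RP UNIV (I0 d) (FF w1 w2 b)) \<le> 2 + d * (d + 1)"
proof -
  let ?g = "\<lambda>i (q::real\<times>real). FF w1 w2 b i (fst q, snd q, 0)"
  have "card (RP UNIV (I0 d) (FF w1 w2 b)) \<le> card (RP UNIV (I0 d) ?g)"
  proof (rule card_RP_transfer[OF fin_I0])
    fix x :: "real\<times>real\<times>real" assume "x \<in> UNIV"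
    show "\<exists>y\<in>UNIV. \<forall>i\<in>I0 d. ?g i y = FF w1 w2 b i x"
      by (rule bexI[of _ "(fst x, fst (snd x))"]) (auto simp: I0_def FF_def preact_gen)
  qed
  moreover have "2 * card (RP UNIV (I0 d) ?g) \<le> 2 + card (I0 d) * (card (I0 d) + 1)"
  proof (rule two_d_G[OF fin_I0], intro ballI)
    fix i assume "i \<in> I0 d"
    then obtain k where k: "i = (k,0)" unfolding I0_def by auto
    show "lin2 (?g i)" unfolding lin2_def k
      by (intro exI[of _ "w1 k"] exI[of _ "w2 k"] exI[of _ "b k"]) simp
  qed
  ultimately show ?thesis using card_I0[of d] by simp
qed




lemma FFg: "FF w1 w2 b i p = (if snd i = 0 then w1 (fst i) * fst p + w2 (fst i) * fst (snd p) + b (fst i)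
    else w1 (fst i) * fst (snd p) + w2 (fst i) * snd (snd p) + b (fst i))"
  unfolding FF_def preact_gen by simp

lemma stepB_Z:
  assumes md: "m < d" and nz: "\<not> (\<forall>p. FF w1 w2 b (m, Suc 0) p = 0)"
  shows "2 * card (RP (UNIV \<inter> {x. FF w1 w2 b (m, Suc 0) x = 0}) (I0 d \<union> I1 m) (FF w1 w2 b))
           \<le> 2 + d * (d + 1) + 2 * m * (d + 1)"
proof -
  let ?F = "FF w1 w2 b"
  let ?Z = "UNIV \<inter> {x. ?F (m, Suc 0) x = 0}"
  define \<alpha> where "\<alpha> = w1 m"
  define \<beta> where "\<beta> = w2 m"
  define \<gamma> where "\<gamma> = b m"
  have Fm: "?F (m, Suc 0) p = \<alpha> * fst (snd p) + \<beta> * snd (snd p) + \<gamma>" for p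
    unfolding \<alpha>_def \<beta>_def \<gamma>_def by (simp add: FFg)
  have fin: "finite (I0 d \<union> I1 m)" by (simp add: fin_I0 fin_I1)
  show ?thesis
  proof (cases "\<beta> = 0")
    case False
    let ?\<psi> = "\<lambda>q::real\<times>real. (fst q, snd q, (-\<alpha>/\<beta>) * snd q + (-\<gamma>/\<beta>))"
    have "card (RP ?Z (I0 d \<union> I1 m) ?F) \<le> card (RP UNIV (I0 d \<union> I1 m) (\<lambda>i q. ?F i (?\<psi> q)))"
    proof (rule card_RP_transfer[OF fin])
      fix x assume "x \<in> ?Z"
      then have "\<alpha> * fst (snd x) + \<beta> * snd (snd x) + \<gamma> = 0" using Fm by simp
      then have "snd (snd x) = (-\<alpha>/\<beta>) * fst (snd x) + (-\<gamma>/\<beta>)" using False by (simp add: field_simps)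
      then have "?\<psi> (fst x, fst (snd x)) = x" by (simp add: prod_eq_iff)
      then show "\<exists>y\<in>UNIV. \<forall>i\<in>I0 d \<union> I1 m. ?F i (?\<psi> y) = ?F i x"
        by (intro bexI[of _ "(fst x, fst (snd x))"]) simp_all
    qed
    moreover have "2 * card (RP UNIV (I0 d \<union> I1 m) (\<lambda>i q. ?F i (?\<psi> q)))
        \<le> 2 + card (I0 d) * (card (I0 d) + 1) + 2 * card (I1 m) * (card (I0 d) + 1)"
    proof (rule two_d[OF fin_I0 fin_I1 I01_disj]; intro ballI)
      fix i assume "i \<in> I0 d"
      then obtain k where k: "i = (k,0)" unfolding I0_def by auto
      show "lin2 (\<lambda>q. ?F i (?\<psi> q))" unfolding lin2_def k
        by (intro exI[of _ "w1 k"] exI[of _ "w2 k"] exI[of _ "b k"]) simp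
    next
      fix i assume "i \<in> I1 m"
      then obtain k where k: "i = (k,Suc 0)" unfolding I1_def by auto
      show "hor2 (\<lambda>q. ?F i (?\<psi> q))" unfolding hor2_def k
        by (intro exI[of _ "w1 k + w2 k * (-\<alpha>/\<beta>)"] exI[of _ "b k + w2 k * (-\<gamma>/\<beta>)"]) (simp add: algebra_simps)
    qed
    ultimately show ?thesis using card_I0[of d] card_I1[of m] by simp
  next
    case beta: True
    show ?thesis
    proof (cases "\<alpha> = 0")
      case True
      have "\<gamma> \<noteq> 0"
      proof
        assume "\<gamma> = 0"
        then have "\<forall>p. ?F (m, Suc 0) p = 0" using Fm True beta by simp
        then show False using nz by blast
      qed
      then have e: "?Z = {}" using Fm True beta by simp
      show ?thesis unfolding e RP_empty_set by simp
    next
      case False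
      let ?\<psi> = "\<lambda>q::real\<times>real. (snd q, -\<gamma>/\<alpha>, fst q)"
      have "card (RP ?Z (I0 d \<union> I1 m) ?F) \<le> card (RP UNIV (I0 d \<union> I1 m) (\<lambda>i q. ?F i (?\<psi> q)))"
      proof (rule card_RP_transfer[OF fin])
        fix x assume "x \<in> ?Z"
        then have "\<alpha> * fst (snd x) + \<gamma> = 0" using Fm beta by simp
        then have "fst (snd x) = -\<gamma>/\<alpha>" using False by (simp add: field_simps)
        then have "?\<psi> (snd (snd x), fst x) = x" by (simp add: prod_eq_iff)
        then show "\<exists>y\<in>UNIV. \<forall>i\<in>I0 d \<union> I1 m. ?F i (?\<psi> y) = ?F i x"
          by (intro bexI[of _ "(snd (snd x), fst x)"]) simp_all
      qed
      moreover have h2: "2 * card (RP UNIV (I1 m \<union> I0 d) (\<lambda>i q. ?F i (?\<psi> q)))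
          \<le> 2 + card (I1 m) * (card (I1 m) + 1) + 2 * card (I0 d) * (card (I1 m) + 1)"
      proof (rule two_d[OF fin_I1 fin_I0]; (intro ballI)?)
        show "I1 m \<inter> I0 d = {}" using I01_disj by blast
      next
        fix i assume "i \<in> I1 m"
        then obtain k where k: "i = (k,Suc 0)" unfolding I1_def by auto
        show "lin2 (\<lambda>q. ?F i (?\<psi> q))" unfolding lin2_def k
          by (intro exI[of _ "w2 k"] exI[of _ "0"] exI[of _ "b k + w1 k * (-\<gamma>/\<alpha>)"]) (simp add: algebra_simps)
      next
        fix i assume "i \<in> I0 d"
        then obtain k where k: "i = (k,0)" unfolding I0_def by auto
        show "hor2 (\<lambda>q. ?F i (?\<psi> q))" unfolding hor2_def k
          by (intro exI[of _ "w1 k"] exI[of _ "b k + w2 k * (-\<gamma>/\<alpha>)"]) (simp add: algebra_simps)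
      qed
      moreover have "2 + m * (m + 1) + 2 * d * (m + 1) \<le> 2 + d * (d + 1) + 2 * m * (d + 1)"
      proof -
        have "m * (m + 1) + 2 * d \<le> d * (d + 1) + 2 * m"
        proof -
          obtain s where s: "d = m + Suc s" using less_imp_Suc_add[OF md] by auto
          show ?thesis unfolding s by (simp add: algebra_simps)
        qed
        then show ?thesis by (simp add: algebra_simps)
      qed
      moreover have D: "I1 m \<union> I0 d = I0 d \<union> I1 m" by blast
      moreover have "2 * card (RP UNIV (I0 d \<union> I1 m) (\<lambda>i q. ?F i (?\<psi> q))) \<le> 2 + m * (m + 1) + 2 * d * (m + 1)"
        using h2 unfolding D card_I0 card_I1 .
      ultimately show ?thesis by linarith
    qed
  qed
qed




lemma I1_Suc: "I1 (Suc m) = insert (m, Suc 0) (I1 m)"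
  unfolding I1_def by (simp add: lessThan_Suc)

lemma stepB:
  "m \<le> d \<Longrightarrow> 2 * card (RP UNIV (I0 d \<union> I1 m) (FF w1 w2 b)) + (d+1)*m
      \<le> (2 + d*(d+1))*(m+1) + (d+1)*m*m"
proof (induction m)
  case 0
  have "I1 0 = {}" unfolding I1_def by simp
  then show ?case using stepA[of d w1 w2 b] by simp
next
  case (Suc m)
  let ?F = "FF w1 w2 b"
  have md: "m < d" using Suc by simp
  have IH: "2 * card (RP UNIV (I0 d \<union> I1 m) ?F) + (d+1)*m \<le> (2 + d*(d+1))*(m+1) + (d+1)*m*m"
    using Suc by simp
  have nin: "(m, Suc 0) \<notin> I0 d \<union> I1 m" unfolding I0_def I1_def by auto
  have fin: "finite (I0 d \<union> I1 m)" by (simp add: fin_I0 fin_I1)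
  have eq: "I0 d \<union> I1 (Suc m) = insert (m, Suc 0) (I0 d \<union> I1 m)" unfolding I1_Suc by blast
  have del: "card (RP UNIV (insert (m, Suc 0) (I0 d \<union> I1 m)) ?F) \<le> card (RP UNIV (I0 d \<union> I1 m) ?F)
       + card (RP (UNIV \<inter> {x. ?F (m, Suc 0) x = 0}) (I0 d \<union> I1 m) ?F)"
    by (rule deletion[OF fin nin cvx3]) (simp add: lin3_FF)
  show ?case
  proof (cases "\<forall>p. ?F (m, Suc 0) p = 0")
    case True
    then have "RP UNIV (insert (m, Suc 0) (I0 d \<union> I1 m)) ?F = {}" by (intro RP_zero) simp
    then show ?thesis unfolding eq by simp
  next
    case False
    have Z: "2 * card (RP (UNIV \<inter> {x. ?F (m, Suc 0) x = 0}) (I0 d \<union> I1 m) ?F)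
           \<le> 2 + d * (d + 1) + 2 * m * (d + 1)" by (rule stepB_Z[OF md False])
    have ar: "(2 + d*(d+1))*(Suc m+1) + (d+1)*Suc m*Suc m
        = (2 + d*(d+1))*(m+1) + (d+1)*m*m + (2 + d*(d+1)) + 2*m*(d+1) + (d+1)"
      by (simp add: algebra_simps)
    have ar2: "(d+1)*Suc m = (d+1)*m + (d+1)" by simp
    have "2 * card (RP UNIV (I0 d \<union> I1 (Suc m)) ?F) + (d+1)*Suc m
        \<le> (2 + d*(d+1))*(m+1) + (d+1)*m*m + (2 + d*(d+1)) + 2*m*(d+1) + (d+1)"
      unfolding eq ar2 using del Z IH by linarith
    then show ?thesis unfolding ar .
  qed
qed

lemma Iall: "(i \<in> I0 d \<union> I1 d) \<longleftrightarrow> fst i < d \<and> snd i < 2"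
  unfolding I0_def I1_def by (cases i) (auto simp: less_2_cases_iff)

lemma regions_eq:
  "{\<sigma> \<in> patterns d. region d w1 w2 b \<sigma> \<noteq> {}} = curry ` RP UNIV (I0 d \<union> I1 d) (FF w1 w2 b)"
proof
  show "{\<sigma> \<in> patterns d. region d w1 w2 b \<sigma> \<noteq> {}} \<subseteq> curry ` RP UNIV (I0 d \<union> I1 d) (FF w1 w2 b)"
  proof
    fix \<sigma> assume s: "\<sigma> \<in> {\<sigma> \<in> patterns d. region d w1 w2 b \<sigma> \<noteq> {}}"
    then obtain x where x: "\<forall>k<d. \<forall>j<2. of_int (\<sigma> k j) * preact w1 w2 b k j x > 0"
      unfolding region_def by auto
    have p: "\<forall>k j. (k < d \<and> j < 2 \<longrightarrow> \<sigma> k j \<in> {-1, 1}) \<and> (\<not> (k < d \<and> j < 2) \<longrightarrow> \<sigma> k j = 0)"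
      using s unfolding patterns_def by auto
    have "\<forall>i. (i \<notin> I0 d \<union> I1 d \<longrightarrow> case_prod \<sigma> i = 0) \<and> (i \<in> I0 d \<union> I1 d \<longrightarrow> case_prod \<sigma> i = 1 \<or> case_prod \<sigma> i = -1)"
    proof
      fix i :: "nat \<times> nat"
      obtain k j where i: "i = (k,j)" by (cases i)
      show "(i \<notin> I0 d \<union> I1 d \<longrightarrow> case_prod \<sigma> i = 0) \<and> (i \<in> I0 d \<union> I1 d \<longrightarrow> case_prod \<sigma> i = 1 \<or> case_prod \<sigma> i = -1)"
        using p Iall[of i d] unfolding i by auto
    qed
    then have "case_prod \<sigma> \<in> sp (I0 d \<union> I1 d)" unfolding sp_def by blast
    moreover have "\<forall>i\<in>I0 d \<union> I1 d. real_of_int (case_prod \<sigma> i) * FF w1 w2 b i x > 0"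
    proof
      fix i :: "nat \<times> nat" assume "i \<in> I0 d \<union> I1 d"
      moreover obtain k j where i: "i = (k,j)" by (cases i)
      ultimately have "k < d" "j < 2" using Iall[of i d] by auto
      then show "real_of_int (case_prod \<sigma> i) * FF w1 w2 b i x > 0" using x unfolding i FF_def by simp
    qed
    ultimately have "case_prod \<sigma> \<in> RP UNIV (I0 d \<union> I1 d) (FF w1 w2 b)" unfolding RP_def by blast
    moreover have "\<sigma> = curry (case_prod \<sigma>)" by simp
    ultimately show "\<sigma> \<in> curry ` RP UNIV (I0 d \<union> I1 d) (FF w1 w2 b)" by blast
  qed
next
  show "curry ` RP UNIV (I0 d \<union> I1 d) (FF w1 w2 b) \<subseteq> {\<sigma> \<in> patterns d. region d w1 w2 b \<sigma> \<noteq> {}}"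
  proof
    fix \<sigma> assume "\<sigma> \<in> curry ` RP UNIV (I0 d \<union> I1 d) (FF w1 w2 b)"
    then obtain \<tau> where t: "\<tau> \<in> RP UNIV (I0 d \<union> I1 d) (FF w1 w2 b)" "\<sigma> = curry \<tau>" by auto
    then obtain x where x: "\<forall>i\<in>I0 d \<union> I1 d. real_of_int (\<tau> i) * FF w1 w2 b i x > 0"
      and sp: "\<tau> \<in> sp (I0 d \<union> I1 d)" unfolding RP_def by auto
    have "\<sigma> \<in> patterns d" unfolding patterns_def
    proof (intro CollectI allI)
      fix k j :: nat
      show "(k < d \<and> j < 2 \<longrightarrow> \<sigma> k j \<in> {-1, 1}) \<and> (\<not> (k < d \<and> j < 2) \<longrightarrow> \<sigma> k j = 0)"
        using sp Iall[of "(k,j)" d] unfolding t(2) sp_def by auto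
    qed
    moreover have "x \<in> region d w1 w2 b \<sigma>" unfolding region_def
    proof (intro CollectI allI impI)
      fix k j :: nat assume "k < d" "j < 2"
      then have "(k,j) \<in> I0 d \<union> I1 d" using Iall[of "(k,j)" d] by simp
      from bspec[OF x this] show "of_int (\<sigma> k j) * preact w1 w2 b k j x > 0" unfolding t(2) FF_def by simp
    qed
    ultimately show "\<sigma> \<in> {\<sigma> \<in> patterns d. region d w1 w2 b \<sigma> \<noteq> {}}" by blast
  qed
qed

lemma num_regions_RP: "num_regions d w1 w2 b = card (RP UNIV (I0 d \<union> I1 d) (FF w1 w2 b))"
proof -
  have "inj_on curry (RP UNIV (I0 d \<union> I1 d) (FF w1 w2 b))"
    by (rule inj_onI) (metis case_prod_curry)
  then show ?thesis unfolding num_regions_def regions_eq by (rule card_image)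
qed

lemma upper: "num_regions d w1 w2 b \<le> d^3 + d^2 + d + 1"
proof -
  have h: "2 * card (RP UNIV (I0 d \<union> I1 d) (FF w1 w2 b)) + (d+1)*d \<le> (2 + d*(d+1))*(d+1) + (d+1)*d*d"
    by (rule stepB) simp
  have ar: "(2 + d*(d+1))*(d+1) + (d+1)*d*d = 2 * (d^3 + d^2 + d + 1) + (d+1)*d"
    by (simp add: algebra_simps power2_eq_square power3_eq_cube)
  have "2 * card (RP UNIV (I0 d \<union> I1 d) (FF w1 w2 b)) + (d+1)*d \<le> 2 * (d^3 + d^2 + d + 1) + (d+1)*d"
    using h unfolding ar .
  then have "2 * card (RP UNIV (I0 d \<union> I1 d) (FF w1 w2 b)) \<le> 2 * (d^3 + d^2 + d + 1)"
    by (rule add_le_imp_le_right)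
  then show ?thesis unfolding num_regions_RP by (rule mult_le_cancel1[THEN iffD1, rule_format]) simp
qed




definition W1 :: "nat \<Rightarrow> real" where "W1 k = 1"
definition W2 :: "nat \<Rightarrow> real" where "W2 k = 2 * (real k + 1)"
definition Bb :: "nat \<Rightarrow> real" where "Bb k = - ((real k + 1)^2)"

definition a0 :: "nat \<Rightarrow> real \<Rightarrow> real \<Rightarrow> real" where
  "a0 k x1 x2 = x1 + 2 * (real k + 1) * x2 - (real k + 1)^2"

definition goodA :: "nat \<Rightarrow> nat set \<Rightarrow> real \<Rightarrow> real \<Rightarrow> bool" where
  "goodA d A x1 x2 \<longleftrightarrow> (\<forall>k<d. (k \<in> A \<longrightarrow> a0 k x1 x2 > 0) \<and> (k \<notin> A \<longrightarrow> a0 k x1 x2 < 0))"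

definition mk :: "nat \<Rightarrow> nat set \<Rightarrow> nat set \<Rightarrow> nat \<times> nat \<Rightarrow> int" where
  "mk d A B = (\<lambda>(k,j). if k < d \<and> j < 2 then (if (if j = 0 then k \<in> A else k \<in> B) then 1 else -1) else 0)"

lemma Iall_set: "I0 d \<union> I1 d = {i. fst i < d \<and> snd i < 2}"
  using Iall by blast

lemma mk_RP:
  assumes gA: "goodA d A x1 x2" and gB: "goodA d B x2 x3"
  shows "mk d A B \<in> RP UNIV (I0 d \<union> I1 d) (FF W1 W2 Bb)"
proof -
  have "mk d A B \<in> sp (I0 d \<union> I1 d)"
    unfolding sp_def mk_def Iall_set by auto
  moreover have "\<forall>i\<in>I0 d \<union> I1 d. real_of_int (mk d A B i) * FF W1 W2 Bb i (x1,x2,x3) > 0"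
  proof
    fix i :: "nat\<times>nat" assume "i \<in> I0 d \<union> I1 d"
    moreover obtain k j where i: "i = (k,j)" by (cases i)
    ultimately have kj: "k < d" "j < 2" using Iall[of i d] by auto
    show "real_of_int (mk d A B i) * FF W1 W2 Bb i (x1,x2,x3) > 0"
    proof (cases "j = 0")
      case True
      have "FF W1 W2 Bb i (x1,x2,x3) = a0 k x1 x2" unfolding i True a0_def W1_def W2_def Bb_def by simp
      then show ?thesis using gA kj True unfolding goodA_def mk_def i
        by (cases "k \<in> A") (auto simp: mult_less_0_iff)
    next
      case False
      then have j1: "j = Suc 0" using kj by simp
      have "FF W1 W2 Bb i (x1,x2,x3) = a0 k x2 x3" unfolding i j1 a0_def W1_def W2_def Bb_def by simp
      then show ?thesis using gB kj j1 unfolding goodA_def mk_def i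
        by (cases "k \<in> B") (auto simp: mult_less_0_iff)
    qed
  qed
  ultimately show ?thesis unfolding RP_def by blast
qed

lemma mk_inj:
  assumes "mk d A B = mk d A' B'" "A \<subseteq> {..<d}" "B \<subseteq> {..<d}" "A' \<subseteq> {..<d}" "B' \<subseteq> {..<d}"
  shows "A = A' \<and> B = B'"
proof -
  have "k \<in> A \<longleftrightarrow> k \<in> A'" for k
  proof (cases "k < d")
    case True
    have "mk d A B (k,0) = mk d A' B' (k,0)" using assms(1) by simp
    then show ?thesis using True unfolding mk_def by (auto split: if_splits)
  next
    case False then show ?thesis using assms by auto
  qed
  moreover have "k \<in> B \<longleftrightarrow> k \<in> B'" for k
  proof (cases "k < d")
    case True
    have "mk d A B (k,1) = mk d A' B' (k,1)" using assms(1) by simp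
    then show ?thesis using True unfolding mk_def by (auto split: if_splits)
  next
    case False then show ?thesis using assms by auto
  qed
  ultimately show ?thesis by blast
qed

lemma LA1:
  assumes "i \<le> j"
  shows "goodA d {i..j} (((real j - real i)/2 + 1/2)^2 - ((real i + real j)/2 + 5/4)^2) ((real i + real j)/2 + 5/4)"
  unfolding goodA_def
proof (intro allI impI conjI)
  fix k assume "k < d"
  define r where "r = (real j - real i)/2 + 1/2"
  define y where "y = (real i + real j)/2 + 5/4"
  define u where "u = real k + 1 - y"
  have e: "a0 k (r^2 - y^2) y = (r - u) * (r + u)" unfolding a0_def u_def by (simp add: algebra_simps power2_eq_square)
  {
    assume "k \<in> {i..j}"
    then have "real i \<le> real k" "real k \<le> real j" by auto
    then have "r - u > 0 \<and> r + u > 0" unfolding r_def u_def y_def by argo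
    then have "r - u > 0" "r + u > 0" by auto
    then show "a0 k (r^2 - y^2) y > 0" unfolding e by simp
  }
  {
    assume "k \<notin> {i..j}"
    then have "k < i \<or> j < k" by auto
    then have "real k + 1 \<le> real i \<or> real j + 1 \<le> real k" by auto
    then have "(r - u > 0 \<and> r + u < 0) \<or> (r - u < 0 \<and> r + u > 0)"
      using of_nat_mono[OF assms, where 'a=real] unfolding r_def u_def y_def by argo
    then show "a0 k (r^2 - y^2) y < 0" unfolding e by (auto simp: mult_less_0_iff)
  }
qed

lemma LA2: "goodA d {} (-1 - y^2) y"
  unfolding goodA_def
proof (intro allI impI conjI)
  fix k assume "k < d"
  have "a0 k (-1 - y^2) y = -1 - (real k + 1 - y)^2" unfolding a0_def by (simp add: algebra_simps power2_eq_square)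
  then show "a0 k (-1 - y^2) y < 0" by (smt (verit) zero_le_power2)
qed simp

lemma LA3:
  assumes y: "y < 0"
  shows "goodA d {..<p} ((real p + 1/2 - y)^2 - y^2) y"
  unfolding goodA_def
proof (intro allI impI conjI)
  fix k assume "k < d"
  define s where "s = real p + 1/2 - y"
  define u where "u = real k + 1 - y"
  have e: "a0 k (s^2 - y^2) y = (s - u) * (s + u)" unfolding a0_def u_def by (simp add: algebra_simps power2_eq_square)
  have su: "s + u > 0" unfolding s_def u_def using y by simp
  {
    assume "k \<in> {..<p}"
    then have "real k + 1 \<le> real p" by auto
    then have "s - u > 0" unfolding s_def u_def by linarith
    then show "a0 k (s^2 - y^2) y > 0" unfolding e s_def[symmetric] using su by simp
  }
  {
    assume "k \<notin> {..<p}"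
    then have "real p \<le> real k" by auto
    then have "s - u < 0" unfolding s_def u_def by linarith
    then show "a0 k (s^2 - y^2) y < 0" unfolding e s_def[symmetric] using su by (simp add: mult_less_0_iff)
  }
qed

lemma LB1:
  assumes y: "y > 0"
  shows "goodA d {..<m} y (((real m + 1/2)^2 - y) / (2 * (real m + 1/2)))"
  unfolding goodA_def
proof (intro allI impI conjI)
  fix k assume "k < d"
  define t where "t = real m + 1/2"
  define a where "a = real k + 1"
  have t0: "t > 0" unfolding t_def by simp
  have e: "a0 k y ((t^2 - y) / (2 * t)) = (t - a) * (a + y / t)"
    unfolding a0_def a_def[symmetric] using t0 by (simp add: field_simps power2_eq_square)
  have p: "a + y / t > 0" unfolding a_def using y t0 by (simp add: add_pos_pos)
  {
    assume "k \<in> {..<m}"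
    then have "real k + 1 \<le> real m" by auto
    then have "t - a > 0" unfolding t_def a_def by linarith
    then show "a0 k y ((t^2 - y) / (2 * t)) > 0" unfolding e using p by simp
  }
  {
    assume "k \<notin> {..<m}"
    then have "real m \<le> real k" by auto
    then have "t - a < 0" unfolding t_def a_def by linarith
    then show "a0 k y ((t^2 - y) / (2 * t)) < 0" unfolding e using p by (simp add: mult_less_0_iff)
  }
qed

lemma LB2:
  assumes "1 \<le> i" "i \<le> j"
  shows "goodA d {i..j} (- ((real i + 1/2) * (real j + 3/2))) (((real i + 1/2) + (real j + 3/2)) / 2)"
  unfolding goodA_def
proof (intro allI impI conjI)
  fix k assume "k < d"
  define s1 where "s1 = real i + 1/2"
  define s2 where "s2 = real j + 3/2"
  define a where "a = real k + 1"
  have e: "a0 k (- (s1 * s2)) ((s1 + s2) / 2) = (a - s1) * (s2 - a)"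
    unfolding a0_def a_def[symmetric] by (simp add: algebra_simps power2_eq_square)
  {
    assume "k \<in> {i..j}"
    then have "real i \<le> real k" "real k \<le> real j" by auto
    then have "a - s1 > 0 \<and> s2 - a > 0" unfolding s1_def s2_def a_def by argo
    then have "a - s1 > 0" "s2 - a > 0" by auto
    then show "a0 k (- (s1 * s2)) ((s1 + s2) / 2) > 0" unfolding e by simp
  }
  {
    assume "k \<notin> {i..j}"
    then have "k < i \<or> j < k" by auto
    then have "real k + 1 \<le> real i \<or> real j + 1 \<le> real k" by auto
    then have "(a - s1 < 0 \<and> s2 - a > 0) \<or> (a - s1 > 0 \<and> s2 - a < 0)"
      using assms of_nat_mono[OF assms(2), where 'a=real] unfolding s1_def s2_def a_def by argo
    then show "a0 k (- (s1 * s2)) ((s1 + s2) / 2) < 0" unfolding e by (auto simp: mult_less_0_iff)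
  }
qed




definition PP :: "nat \<Rightarrow> (nat \<times> nat) set" where "PP d = {(i,j). i \<le> j \<and> j < d}"
definition PQ :: "nat \<Rightarrow> (nat \<times> nat) set" where "PQ d = {(i,j). 1 \<le> i \<and> i \<le> j \<and> j < d}"
definition iv :: "nat \<times> nat \<Rightarrow> nat set" where "iv p = {fst p..snd p}"

lemma fin_PP: "finite (PP d)"
proof -
  have "PP d \<subseteq> {..<d} \<times> {..<d}" unfolding PP_def by auto
  then show ?thesis by (rule finite_subset) simp
qed

lemma PQ_sub: "PQ d \<subseteq> PP d" unfolding PQ_def PP_def by auto
lemma fin_PQ: "finite (PQ d)" using fin_PP PQ_sub by (rule finite_subset[rotated])

lemma card_PP: "2 * card (PP d) = d * (d + 1)"
proof (induction d)
  case 0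
  have "PP 0 = {}" unfolding PP_def by auto
  then show ?case by simp
next
  case (Suc d)
  have e: "PP (Suc d) = PP d \<union> (\<lambda>i. (i,d)) ` {..d}" unfolding PP_def by auto
  have dj: "PP d \<inter> (\<lambda>i. (i,d)) ` {..d} = {}" unfolding PP_def by auto
  have c: "card ((\<lambda>i. (i,d)) ` {..d}) = Suc d" by (simp add: card_image inj_on_def)
  have "card (PP (Suc d)) = card (PP d) + Suc d"
    unfolding e using card_Un_disjoint[OF fin_PP _ dj] c by simp
  then show ?case using Suc by (simp add: algebra_simps)
qed

lemma card_PQ: "card (PQ d) + d = card (PP d)"
proof -
  have e: "PP d = PQ d \<union> (\<lambda>j. (0,j)) ` {..<d}" unfolding PP_def PQ_def by auto
  have dj: "PQ d \<inter> (\<lambda>j. (0,j)) ` {..<d} = {}" unfolding PQ_def by auto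
  have c: "card ((\<lambda>j. (0::nat,j)) ` {..<d}) = d" by (simp add: card_image inj_on_def)
  show ?thesis unfolding e using card_Un_disjoint[OF fin_PQ _ dj] c by simp
qed

lemma iv_inj: "inj_on iv (PP d)"
proof (rule inj_onI)
  fix p q assume p: "p \<in> PP d" and q: "q \<in> PP d" and e: "iv p = iv q"
  have p1: "fst p \<le> snd p" using p unfolding PP_def by auto
  have q1: "fst q \<le> snd q" using q unfolding PP_def by auto
  have "fst p \<in> iv q" "snd p \<in> iv q" using p1 e[symmetric] unfolding iv_def by auto
  moreover have "fst q \<in> iv p" "snd q \<in> iv p" using q1 e unfolding iv_def by auto
  ultimately have "fst p = fst q" "snd p = snd q" unfolding iv_def by auto
  then show "p = q" by (simp add: prod_eq_iff)
qed

definition A1 where "A1 d = insert {} (iv ` PP d)"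
definition B1 where "B1 d = lessThan ` {..d}"
definition B2 where "B2 d = iv ` PQ d"

definition U where "U d = A1 d \<times> B1 d \<union> B1 d \<times> B2 d"

lemma card_U: "card (U d) = d^3 + d^2 + d + 1"
proof -
  have fA1: "finite (A1 d)" unfolding A1_def using fin_PP by simp
  have fB1: "finite (B1 d)" unfolding B1_def by simp
  have fB2: "finite (B2 d)" unfolding B2_def using fin_PQ by simp
  have cA1: "card (A1 d) = Suc (card (PP d))"
  proof -
    have "{} \<notin> iv ` PP d" unfolding iv_def PP_def by auto
    then show ?thesis unfolding A1_def using fin_PP card_image[OF iv_inj] by simp
  qed
  have cB1: "card (B1 d) = Suc d" unfolding B1_def by (simp add: card_image inj_on_def)
  have cB2: "card (B2 d) = card (PQ d)" unfolding B2_def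
    using card_image[OF inj_on_subset[OF iv_inj PQ_sub]] .
  have dj: "A1 d \<times> B1 d \<inter> B1 d \<times> B2 d = {}"
  proof -
    have "B1 d \<inter> B2 d = {}"
    proof (rule ccontr)
      assume "B1 d \<inter> B2 d \<noteq> {}"
      then obtain X where X: "X \<in> B1 d" "X \<in> B2 d" by blast
      then obtain m where mX: "X = {..<m}" unfolding B1_def by auto
      obtain i j where ij: "X = {i..j}" "1 \<le> i" "i \<le> j" using X(2) unfolding B2_def PQ_def iv_def by auto
      have m: "{..<m} = {i..j}" "1 \<le> i" "i \<le> j" using mX ij by auto
      then have "i \<in> {..<m}" by auto
      then have "0 \<in> {..<m}" by auto
      then show False using m by auto
    qed
    then show ?thesis by auto
  qed
  have "card (U d) = card (A1 d \<times> B1 d) + card (B1 d \<times> B2 d)"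
    unfolding U_def by (rule card_Un_disjoint) (use fA1 fB1 fB2 dj in auto)
  also have "\<dots> = Suc (card (PP d)) * Suc d + Suc d * card (PQ d)"
    using cA1 cB1 cB2 by (simp add: card_cartesian_product)
  also have "\<dots> = d^3 + d^2 + d + 1"
  proof -
    let ?T = "card (PP d)" and ?T' = "card (PQ d)"
    have h1: "?T' + d = ?T" by (rule card_PQ)
    have h2: "2 * ?T = d * d + d" using card_PP[of d] by (simp add: algebra_simps)
    have h3: "?T + 1 + ?T' = d * d + 1" using h1 h2 by linarith
    have "Suc ?T * Suc d + Suc d * ?T' = Suc d * (?T + 1 + ?T')" by (simp add: algebra_simps)
    also have "\<dots> = Suc d * (d * d + 1)" using h3 by simp
    also have "\<dots> = d^3 + d^2 + d + 1" by (simp add: algebra_simps power2_eq_square power3_eq_cube)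
    finally show ?thesis .
  qed
  finally show ?thesis .
qed

lemma U_sub: "(A, B) \<in> U d \<Longrightarrow> A \<subseteq> {..<d} \<and> B \<subseteq> {..<d}"
  unfolding U_def A1_def B1_def B2_def iv_def PP_def PQ_def by auto

lemma U_real: "(A, B) \<in> U d \<Longrightarrow> mk d A B \<in> RP UNIV (I0 d \<union> I1 d) (FF W1 W2 Bb)"
proof -
  assume "(A, B) \<in> U d"
  then consider (e) "A = {}" "B \<in> B1 d" | (iv) i j where "A = {i..j}" "i \<le> j" "B \<in> B1 d"
    | (two) "A \<in> B1 d" "B \<in> B2 d"
    unfolding U_def A1_def iv_def PP_def by auto
  then show ?thesis
  proof cases
    case e
    then obtain m where m: "B = {..<m}" unfolding B1_def by auto
    show ?thesis unfolding e(1) m by (rule mk_RP[OF LA2[where y=1] LB1[where y=1]]) simp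
  next
    case iv
    then obtain m where m: "B = {..<m}" unfolding B1_def by auto
    have "(real i + real j)/2 + 5/4 > 0" by (simp add: add_nonneg_pos)
    then show ?thesis unfolding iv(1) m by (rule mk_RP[OF LA1[OF iv(2)] LB1])
  next
    case two
    then obtain p where p: "A = {..<p}" unfolding B1_def by auto
    obtain i j where ij: "B = {i..j}" "1 \<le> i" "i \<le> j" using two unfolding B2_def PQ_def iv_def by auto
    have y: "- ((real i + 1/2) * (real j + 3/2)) < 0" by (simp add: mult_pos_pos add_pos_pos)
    show ?thesis unfolding p ij(1) by (rule mk_RP[OF LA3[OF y] LB2[OF ij(2,3)]])
  qed
qed

lemma lower: "d^3 + d^2 + d + 1 \<le> num_regions d W1 W2 Bb"
proof -
  let ?g = "\<lambda>(A, B). mk d A B"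
  have inj: "inj_on ?g (U d)"
  proof (rule inj_onI)
    fix x y assume x: "x \<in> U d" and y: "y \<in> U d" and e: "?g x = ?g y"
    obtain A B A' B' where xy: "x = (A,B)" "y = (A',B')" by (cases x, cases y) auto
    show "x = y" using mk_inj[of d A B A' B'] e U_sub[of A B d] U_sub[of A' B' d] x y unfolding xy by auto
  qed
  have sub: "?g ` U d \<subseteq> RP UNIV (I0 d \<union> I1 d) (FF W1 W2 Bb)"
    using U_real by auto
  have "d^3 + d^2 + d + 1 = card (?g ` U d)" using card_image[OF inj] card_U by simp
  also have "\<dots> \<le> card (RP UNIV (I0 d \<union> I1 d) (FF W1 W2 Bb))"
    by (rule card_mono[OF finite_RP sub]) (simp add: fin_I0 fin_I1)
  finally show ?thesis unfolding num_regions_RP .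
qed

theorem mainTheorem8:
  fixes d :: nat
  assumes "d \<ge> 1"
  shows "is_max_regions d (d ^ 3 + d ^ 2 + d + 1)"
  unfolding is_max_regions_def
proof
  show "\<exists>w1 w2 b. num_regions d w1 w2 b = d ^ 3 + d ^ 2 + d + 1"
    using lower[of d] upper[of d W1 W2 Bb] by (intro exI[of _ W1] exI[of _ W2] exI[of _ Bb]) simp
  show "\<forall>w1 w2 b. num_regions d w1 w2 b \<le> d ^ 3 + d ^ 2 + d + 1"
    using upper by blast
qed


end
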